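(* Let $\{\omega_n:n\in\mathbb{N}_0\}$ and $\{\tilde\omega_n:n\in\mathbb{N}_0\}$ be the wavelet packets (defined in the context) associated with a pair of biorthogonal scaling functions $\omega_0=\varphi$ and $\tilde\omega_0=\tilde\varphi$ and associated biorthogonal wavelets. Then $$\langle\omega_n(\cdot),\tilde\omega_n(\cdot-u(k))\rangle=\delta_{0,k}\quad\text{for all }k\in\mathbb{N}_0,\ n\in\mathbb{N}_0.$$
   Context: $K$ is a local field of positive characteristic $p$ with ring of integers $\mathfrak{D}=\{|x|\le1\}$, prime ideal $\mathfrak{B}=\mathfrak{p}\mathfrak{D}$ ($\mathfrak{p}$ a prime element), $q=|\mathfrak{D}/\mathfrak{B}|=p^c$, Haar measure normalized with $\mathfrak{D}$ of measure $1$. Choose $\zeta_0=1,\zeta_1,\dots,\zeta_{c-1}\in\mathfrak{D}$ with $|\zeta_j|=1$ whose images form a basis of $\mathfrak{D}/\mathfrak{B}\cong GF(q)$ over $GF(p)$; for $0\le n<q$, $n=a_0+a_1p+\dots+a_{c-1}p^{c-1}$ ($0\le a_k<p$), put $u(n)=(a_0+a_1\zeta_1+\dots+a_{c-1}\zeta_{c-1})\mathfrak{p}^{-1}$, and for $n=b_0+b_1q+\dots+b_sq^s$ ($0\le b_k<q$), $u(n)=u(b_0)+u(b_1)\mathfrak{p}^{-1}+\dots+u(b_s)\mathfrak{p}^{-s}$. $\chi$ is a character of $(K,+)$ trivial on $\mathfrak{D}$, non-trivial on $\mathfrak{B}^{-1}$, $\chi_k(x)=\chi(u(k)x)$; $\hat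 f(\xi)=\int_Kf(x)\overline{\chi(\xi x)}dx$. Let $\varphi,\tilde\varphi\in L^2(K)$ and $\psi_\ell,\tilde\psi_\ell\in L^2(K)$ ($1\le\ell\le q-1$) satisfy $\varphi(x)=\sqrt q\sum_{k\in\mathbb{N}_0}a_k^0\varphi(\mathfrak{p}^{-1}x-u(k))$, $\psi_\ell(x)=\sqrt q\sum_ka_k^\ell\varphi(\mathfrak{p}^{-1}x-u(k))$, and the same with tildes (coefficients $\tilde a_k^s$), all coefficient sequences in $\ell^2(\mathbb{N}_0)$; masks $m_s(\xi)=\frac1{\sqrt q}\sum_ka_k^s\overline{\chi_k(\xi)}$, $\tilde m_s$ analogously ($0\le s\le q-1$). $\varphi$ is the scaling function of a multiresolution analysis of $L^2(K)$ and $\{\psi_\ell(\cdot-u(k))\}$ is a Riesz basis of a direct complement $W_0$ of $V_0$ in $V_1$. Biorthogonality: for all $k\in\mathbb{N}_0$, $1\le\ell,\ell'\le q-1$: $\langle\varphi,\tilde\varphi(\cdot-u(k))\rangle=\delta_{0,k}$, $\langle\varphi,\tilde\psi_\ell(\cdot-u(k))\rangle=0$, $\langle\tilde\varphi,\psi_\ell(\cdot-u(k))\rangle=0$, $\langle\psi_\ell,\tilde\psi_{\ell'}(\cdot-u(k))\rangle=\delta_{\ell,\ell'}\delta_{0,k}$. Wavelet packets: $\omega_0=\varphi$, $\tilde\omega_0=\tilde\varphi$, and for $n=qr+s$ with $r\in\mathbb{N}_0$, $0\le s\le q-1$: $\omega_n(x)=\sqrt q\sum_{k\in\mathbb{N}_0}a_k^s\omega_r(\mathfrak{p}^{-1}x-u(k))$,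 $\tilde\omega_n(x)=\sqrt q\sum_k\tilde a_k^s\tilde\omega_r(\mathfrak{p}^{-1}x-u(k))$ (so $\omega_s=\psi_s$, $\tilde\omega_s=\tilde\psi_s$ for $1\le s\le q-1$). *)

theory Defs
  imports "HOL-Analysis.Analysis"
begin

text \<open>The field K is an abstract type 'k carrying a field structure and a topology.
  absv is the normalized absolute value, pr a prime element, q = p^c the cardinality
  of the residue field D/B, zeta the chosen lifts of a GF(p)-basis of D/B.\<close>

definition local_field_char_p ::
  "('k::{field,topological_space} \<Rightarrow> real) \<Rightarrow> nat \<Rightarrow> nat \<Rightarrow> 'k \<Rightarrow> bool" where
  "local_field_char_p absv p c pr \<longleftrightarrow>
     prime p \<and> CHAR('k) = p \<and> 0 < c \<and>
     (\<forall>x. absv x = 0 \<longleftrightarrow> x = 0) \<and>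
     (\<forall>x. 0 \<le> absv x) \<and>
     (\<forall>x y. absv (x * y) = absv x * absv y) \<and>
     (\<forall>x y. absv (x + y) \<le> max (absv x) (absv y)) \<and>
     (\<forall>S. open S \<longleftrightarrow> (\<forall>x\<in>S. \<exists>e>0. \<forall>y. absv (y - x) < e \<longrightarrow> y \<in> S)) \<and>
     compact {x. absv x \<le> 1} \<and>
     absv pr = 1 / real (p ^ c) \<and>
     (\<forall>x. absv x < 1 \<longrightarrow> absv x \<le> absv pr)"

text \<open>Linear combination with GF(p)-coefficients (given as digits 0..p-1).\<close>
definition zeta_comb :: "nat \<Rightarrow> (nat \<Rightarrow> 'k::field) \<Rightarrow> (nat \<Rightarrow> nat) \<Rightarrow> 'k" where
  "zeta_comb c zeta a = (\<Sum>j<c. of_nat (a j) * zeta j)"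

text \<open>zeta_0 = 1, |zeta_j| = 1, and the images of zeta_0..zeta_{c-1} form a basis of
  D/B over GF(p): every residue class of D modulo B has exactly one representative
  of the form sum a_j zeta_j with 0 \<le> a_j < p.\<close>
definition residue_basis ::
  "('k::field \<Rightarrow> real) \<Rightarrow> nat \<Rightarrow> nat \<Rightarrow> (nat \<Rightarrow> 'k) \<Rightarrow> bool" where
  "residue_basis absv p c zeta \<longleftrightarrow>
     zeta 0 = 1 \<and> (\<forall>j<c. absv (zeta j) = 1) \<and>
     (\<forall>a b. (\<forall>j<c. a j < p) \<longrightarrow> (\<forall>j<c. b j < p) \<longrightarrow>
        absv (zeta_comb c zeta a - zeta_comb c zeta b) < 1 \<longrightarrow> (\<forall>j<c. a j = b j)) \<and>
     (\<forall>x. absv x \<le> 1 \<longrightarrow> (\<exists>a. (\<forall>j<c. a j < p) \<and> absv (x - zeta_comb c zeta a) < 1))"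

text \<open>The points u(n): for n = b_0 + b_1 q + ... (base q digits) and
  b = a_0 + a_1 p + ... + a_{c-1} p^{c-1} (base p digits),
  u(n) = sum_k (sum_j a_j(b_k) zeta_j) pr^{-(k+1)}.  The k-th base-q digit of n is
  (n div q^k) mod q; digits with q^k > n vanish, so summing over k \<le> n suffices.\<close>
definition u_pt :: "nat \<Rightarrow> nat \<Rightarrow> (nat \<Rightarrow> 'k::field) \<Rightarrow> 'k \<Rightarrow> nat \<Rightarrow> 'k" where
  "u_pt p c zeta pr n =
     (\<Sum>k\<le>n. (\<Sum>j<c. of_nat (((n div (p ^ c) ^ k) mod (p ^ c)) div p ^ j mod p) * zeta j)
              * inverse pr ^ (k + 1))"

definition haar_measure ::
  "('k::{field,topological_space} \<Rightarrow> real) \<Rightarrow> 'k measure \<Rightarrow> bool" where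
  "haar_measure absv M \<longleftrightarrow>
     sets M = sets borel \<and>
     (\<forall>a A. A \<in> sets M \<longrightarrow> emeasure M ((\<lambda>x. a + x) ` A) = emeasure M A) \<and>
     emeasure M {x. absv x \<le> 1} = 1"

definition good_character ::
  "('k::{field,topological_space} \<Rightarrow> real) \<Rightarrow> nat \<Rightarrow> ('k \<Rightarrow> complex) \<Rightarrow> bool" where
  "good_character absv q chi \<longleftrightarrow>
     continuous_on UNIV chi \<and> (\<forall>x. cmod (chi x) = 1) \<and>
     (\<forall>x y. chi (x + y) = chi x * chi y) \<and>
     (\<forall>x. absv x \<le> 1 \<longrightarrow> chi x = 1) \<and>
     (\<exists>x. absv x \<le> real q \<and> chi x \<noteq> 1)"

definition L2 :: "'k measure \<Rightarrow> ('k \<Rightarrow> complex) \<Rightarrow> bool" where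
  "L2 M f \<longleftrightarrow> f \<in> borel_measurable M \<and> integrable M (\<lambda>x. (cmod (f x))\<^sup>2)"

definition ip :: "'k measure \<Rightarrow> ('k \<Rightarrow> complex) \<Rightarrow> ('k \<Rightarrow> complex) \<Rightarrow> complex" where
  "ip M f g = (LINT x|M. f x * cnj (g x))"

definition nsq :: "'k measure \<Rightarrow> ('k \<Rightarrow> complex) \<Rightarrow> real" where
  "nsq M f = (LINT x|M. (cmod (f x))\<^sup>2)"

definition L2_lim :: "'k measure \<Rightarrow> (nat \<Rightarrow> 'k \<Rightarrow> complex) \<Rightarrow> ('k \<Rightarrow> complex) \<Rightarrow> bool" where
  "L2_lim M S f \<longleftrightarrow> (\<lambda>N. nsq M (\<lambda>x. f x - S N x)) \<longlonglongrightarrow> 0"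

definition closed_subspace :: "'k measure \<Rightarrow> ('k \<Rightarrow> complex) set \<Rightarrow> bool" where
  "closed_subspace M V \<longleftrightarrow>
     (\<forall>f\<in>V. L2 M f) \<and> (\<lambda>x. 0) \<in> V \<and>
     (\<forall>f\<in>V. \<forall>g\<in>V. (\<lambda>x. f x + g x) \<in> V) \<and>
     (\<forall>f\<in>V. \<forall>c. (\<lambda>x. c * f x) \<in> V) \<and>
     (\<forall>f. L2 M f \<longrightarrow> (\<forall>e>0. \<exists>g\<in>V. nsq M (\<lambda>x. f x - g x) < e) \<longrightarrow> f \<in> V)"

definition riesz_basis ::
  "'k measure \<Rightarrow> ('i \<Rightarrow> 'k \<Rightarrow> complex) \<Rightarrow> 'i set \<Rightarrow> ('k \<Rightarrow> complex) set \<Rightarrow> bool" where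
  "riesz_basis M g I V \<longleftrightarrow>
     (\<forall>i\<in>I. g i \<in> V) \<and>
     (\<forall>f\<in>V. \<forall>e>0. \<exists>F c. finite F \<and> F \<subseteq> I \<and>
         nsq M (\<lambda>x. f x - (\<Sum>i\<in>F. c i * g i x)) < e) \<and>
     (\<exists>A B. 0 < A \<and> A \<le> B \<and>
        (\<forall>F c. finite F \<longrightarrow> F \<subseteq> I \<longrightarrow>
           A * (\<Sum>i\<in>F. (cmod (c i))\<^sup>2) \<le> nsq M (\<lambda>x. \<Sum>i\<in>F. c i * g i x) \<and>
           nsq M (\<lambda>x. \<Sum>i\<in>F. c i * g i x) \<le> B * (\<Sum>i\<in>F. (cmod (c i))\<^sup>2)))"

definition mra ::
  "'k measure \<Rightarrow> 'k::field \<Rightarrow> (nat \<Rightarrow> 'k) \<Rightarrow> ('k \<Rightarrow> complex) \<Rightarrow> (int \<Rightarrow> ('k \<Rightarrow> complex) set) \<Rightarrow> bool"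
  where
  "mra M pr u phi V \<longleftrightarrow>
     (\<forall>j. closed_subspace M (V j)) \<and>
     (\<forall>j. V j \<subseteq> V (j + 1)) \<and>
     (\<forall>f. L2 M f \<longrightarrow> (\<forall>e>0. \<exists>j. \<exists>g\<in>V j. nsq M (\<lambda>x. f x - g x) < e)) \<and>
     (\<forall>f. (\<forall>j. f \<in> V j) \<longrightarrow> (AE x in M. f x = 0)) \<and>
     (\<forall>j f. f \<in> V j \<longleftrightarrow> (\<lambda>x. f (inverse pr * x)) \<in> V (j + 1)) \<and>
     riesz_basis M (\<lambda>k x. phi (x - u k)) UNIV (V 0)"

definition direct_complement ::
  "'k measure \<Rightarrow> ('k \<Rightarrow> complex) set \<Rightarrow> ('k \<Rightarrow> complex) set \<Rightarrow> ('k \<Rightarrow> complex) set \<Rightarrow> bool" where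
  "direct_complement M W V0 V1 \<longleftrightarrow>
     closed_subspace M W \<and> W \<subseteq> V1 \<and>
     (\<forall>f\<in>V1. \<exists>g\<in>V0. \<exists>h\<in>W. f = (\<lambda>x. g x + h x)) \<and>
     (\<forall>f. f \<in> V0 \<and> f \<in> W \<longrightarrow> (AE x in M. f x = 0))"

definition two_scale ::
  "'k measure \<Rightarrow> nat \<Rightarrow> 'k::field \<Rightarrow> (nat \<Rightarrow> 'k) \<Rightarrow> (nat \<Rightarrow> complex) \<Rightarrow>
     ('k \<Rightarrow> complex) \<Rightarrow> ('k \<Rightarrow> complex) \<Rightarrow> bool" where
  "two_scale M q pr u a g f \<longleftrightarrow>
     L2_lim M (\<lambda>N x. complex_of_real (sqrt (real q)) *
                      (\<Sum>k<N. a k * g (inverse pr * x - u k))) f"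

end

theory Submission
  imports Defs
begin


lemma digits_expand:
  fixes p c n :: nat
  assumes "n < p ^ c"
  shows "n = (\<Sum>j<c. (n div p ^ j mod p) * p ^ j)"
  using assms
proof (induction c arbitrary: n)
  case 0 then show ?case by simp
next
  case (Suc c)
  have "n div p < p ^ c" using Suc.prems
    by (metis div_less_iff_less_mult mult.commute nat_neq_iff not_less0 pos2 power_Suc zero_less_power
        less_nat_zero_code mult_0_right power_0 power_Suc0_right gr_zeroI)
  from Suc.IH[OF this] have IH: "n div p = (\<Sum>j<c. (n div p div p ^ j mod p) * p ^ j)" .
  have "(\<Sum>j<Suc c. (n div p ^ j mod p) * p ^ j) = n mod p + (\<Sum>j<c. (n div p ^ Suc j mod p) * p ^ Suc j)"
    by (subst sum.lessThan_Suc_shift) simp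
  also have "(\<Sum>j<c. (n div p ^ Suc j mod p) * p ^ Suc j) = p * (\<Sum>i<c. (n div p div p ^ i mod p) * p ^ i)"
    by (subst sum_distrib_left, rule sum.cong) (simp_all add: div_mult2_eq mult_ac)
  also have "\<dots> = p * (n div p)" using IH by simp
  finally show ?case by simp
qed

lemma digits_sum_bound:
  fixes p c :: nat and d :: "nat \<Rightarrow> nat"
  assumes "\<forall>j<c. d j < p"
  shows "(\<Sum>i<c. d i * p ^ i) < p ^ c"
  using assms
proof (induction c arbitrary: d)
  case 0 then show ?case by simp
next
  case (Suc c)
  have d0: "d 0 < p" using Suc.prems by simp
  have "(\<Sum>i<c. d (Suc i) * p ^ i) < p ^ c" using Suc.prems by (intro Suc.IH) auto
  hence S: "(\<Sum>i<c. d (Suc i) * p ^ i) + 1 \<le> p ^ c" by simp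
  have "(\<Sum>i<Suc c. d i * p ^ i) = d 0 + p * (\<Sum>i<c. d (Suc i) * p ^ i)"
    by (subst sum.lessThan_Suc_shift) (simp add: sum_distrib_left mult.commute mult.left_commute)
  also have "\<dots> < p + p * (\<Sum>i<c. d (Suc i) * p ^ i)" using d0 by simp
  also have "\<dots> = p * ((\<Sum>i<c. d (Suc i) * p ^ i) + 1)" by (simp add: algebra_simps)
  also have "\<dots> \<le> p * p ^ c" using S by (intro mult_le_mono2) 
  finally show ?case by simp
qed

lemma digits_extract:
  fixes p c :: nat and d :: "nat \<Rightarrow> nat"
  assumes "\<forall>j<c. d j < p" "j < c"
  shows "(\<Sum>i<c. d i * p ^ i) div p ^ j mod p = d j"
  using assms
proof (induction c arbitrary: d j)
  case 0 then show ?case by simp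
next
  case (Suc c)
  have d0: "d 0 < p" using Suc.prems by simp
  have eq: "(\<Sum>i<Suc c. d i * p ^ i) = d 0 + p * (\<Sum>i<c. d (Suc i) * p ^ i)"
    by (subst sum.lessThan_Suc_shift) (simp add: sum_distrib_left mult.commute mult.left_commute)
  show ?case
  proof (cases j)
    case 0 then show ?thesis using d0 eq by simp
  next
    case (Suc j')
    have "(\<Sum>i<Suc c. d i * p ^ i) div p = (\<Sum>i<c. d (Suc i) * p ^ i)"
      using eq d0 by simp
    moreover have "(\<Sum>i<c. d (Suc i) * p ^ i) div p ^ j' mod p = d (Suc j')"
      using Suc.prems Suc by (intro Suc.IH[of "\<lambda>i. d (Suc i)"]) auto
    ultimately show ?thesis using Suc by (simp add: div_mult2_eq)
  qed
qed

lemma div_aux: "z < (Q::nat) \<Longrightarrow> (z + Q * e) div Q = e" by simp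

locale lfa =
  fixes absv :: "'k::{field,topological_space} \<Rightarrow> real" and p c :: nat and pr :: 'k
    and zeta :: "nat \<Rightarrow> 'k"
  assumes K: "local_field_char_p absv p c pr"
    and Z: "residue_basis absv p c zeta"
begin

abbreviation "q \<equiv> p ^ c"
abbreviation "u \<equiv> u_pt p c zeta pr"
abbreviation "ipr \<equiv> inverse pr"

definition nu :: "nat \<Rightarrow> 'k" where
  "nu x = (\<Sum>j<c. of_nat ((x mod q) div p ^ j mod p) * zeta j)"

lemma prime_p: "prime p" and char_p: "CHAR('k) = p" and c_pos: "0 < c"
  using K unfolding local_field_char_p_def by auto

lemma p_ge2: "p \<ge> 2" using prime_p prime_ge_2_nat by blast
lemma p_pos[simp]: "0 < p" "p \<noteq> 0" using p_ge2 by auto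
lemma q_ge2: "q \<ge> 2"
proof -
  have "p ^ 1 \<le> p ^ c" using c_pos p_ge2 by (intro power_increasing) auto
  thus ?thesis using p_ge2 by simp
qed

lemma of_nat_p: "(of_nat p :: 'k) = 0"
  using of_nat_CHAR[where 'a='k] char_p by simp

lemma of_nat_mod_p: "(of_nat (m mod p) :: 'k) = of_nat m"
proof -
  have "(of_nat m :: 'k) = of_nat (m mod p + p * (m div p))" by simp
  also have "\<dots> = of_nat (m mod p)" by (simp only: of_nat_add of_nat_mult of_nat_p) simp
  finally show ?thesis by simp
qed

lemma nu_0[simp]: "nu 0 = 0" by (simp add: nu_def)

lemma nu_mod: "nu (x mod q) = nu x" by (simp add: nu_def)

lemma pow_gt: "k < q ^ k"
proof -
  have "k < 2 ^ k" by (rule less_exp)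
  also have "\<dots> \<le> q ^ k" using q_ge2 by (intro power_mono) auto
  finally show ?thesis .
qed

lemma u_sum: assumes "n < K" shows "u n = (\<Sum>k<K. nu (n div q ^ k) * ipr ^ (k + 1))"
proof -
  have "u n = (\<Sum>k<Suc n. nu (n div q ^ k) * ipr ^ (k + 1))"
    unfolding u_pt_def nu_def by (simp add: atMost_atLeast0 lessThan_Suc_atMost mod_mod_cancel)
  also have "\<dots> = (\<Sum>k<K. nu (n div q ^ k) * ipr ^ (k + 1))"
  proof (rule sum.mono_neutral_left)
    show "\<forall>i\<in>{..<K} - {..<Suc n}. nu (n div q ^ i) * ipr ^ (i + 1) = 0"
    proof
      fix i assume "i \<in> {..<K} - {..<Suc n}"
      hence "n < q ^ i" using pow_gt[of i] by auto
      thus "nu (n div q ^ i) * ipr ^ (i + 1) = 0" by simp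
    qed
  qed (use assms in auto)
  finally show ?thesis .
qed

lemma u_0[simp]: "u 0 = 0" by (simp add: u_pt_def nu_def)

lemma u_rec: "u n = ipr * (nu n + u (n div q))"
proof -
  have "u n = (\<Sum>k<Suc (Suc n). nu (n div q ^ k) * ipr ^ (k + 1))" by (rule u_sum) simp
  also have "\<dots> = nu n * ipr + (\<Sum>k<Suc n. nu (n div q ^ Suc k) * ipr ^ (Suc k + 1))"
    by (subst sum.lessThan_Suc_shift) simp
  also have "(\<Sum>k<Suc n. nu (n div q ^ Suc k) * ipr ^ (Suc k + 1))
      = ipr * (\<Sum>k<Suc n. nu (n div q div q ^ k) * ipr ^ (k + 1))"
    by (subst sum_distrib_left, rule sum.cong) (simp_all add: div_mult2_eq mult_ac)
  also have "(\<Sum>k<Suc n. nu (n div q div q ^ k) * ipr ^ (k + 1)) = u (n div q)"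
    by (rule u_sum[symmetric]) (simp add: le_imp_less_Suc)
  finally show ?thesis by (simp add: algebra_simps)
qed

lemma nu_comb: assumes "\<forall>j<c. d j < p"
  shows "nu (\<Sum>i<c. d i * p ^ i) = zeta_comb c zeta d"
  using digits_sum_bound[OF assms] digits_extract[OF assms]
  by (simp add: nu_def zeta_comb_def)

lemma nu_add: "\<exists>z<q. nu x + nu y = nu z"
proof -
  define dx where "dx j = (x mod q) div p ^ j mod p" for j
  define dy where "dy j = (y mod q) div p ^ j mod p" for j
  define d where "d j = (dx j + dy j) mod p" for j
  have dlt: "\<forall>j<c. d j < p" using p_ge2 by (simp add: d_def)
  let ?z = "\<Sum>i<c. d i * p ^ i"
  have "nu ?z = zeta_comb c zeta d" by (rule nu_comb[OF dlt])
  also have "\<dots> = nu x + nu y"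
    by (simp add: zeta_comb_def nu_def d_def of_nat_mod_p sum.distrib[symmetric] algebra_simps
        dx_def dy_def)
  finally show ?thesis using digits_sum_bound[OF dlt] by metis
qed

lemma u_add: "\<exists>e. u a + u b = u e"
proof (induction "a + b" arbitrary: a b rule: less_induct)
  case less
  show ?case
  proof (cases "a = 0 \<or> b = 0")
    case True then show ?thesis by auto
  next
    case False
    have "a div q < a" "b div q < b" using False q_ge2 by auto
    then obtain e' where e': "u (a div q) + u (b div q) = u e'"
      using less[of "a div q" "b div q"] by auto
    obtain z where z: "z < q" "nu a + nu b = nu z" using nu_add by blast
    have "u (z + q * e') = ipr * (nu (z + q * e') + u ((z + q * e') div q))" by (rule u_rec)
    also have "nu (z + q * e') = nu z" using nu_mod[of "z + q * e'"] nu_mod[of z] by simp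
    also have "(z + q * e') div q = e'" using z(1) by (rule div_aux)
    finally have 1: "u (z + q * e') = ipr * (nu z + u e')" .
    have "u a + u b = ipr * ((nu a + nu b) + (u (a div q) + u (b div q)))"
      using u_rec[of a] u_rec[of b] by (simp add: algebra_simps)
    hence "u a + u b = u (z + q * e')" using 1 z(2) e' by simp
    then show ?thesis by metis
  qed
qed

lemma u_smul: "\<exists>e. of_nat m * u a = u e"
proof (induction m)
  case 0 show ?case by (metis mult_zero_left of_nat_0 u_0)
next
  case (Suc m)
  then obtain e where "of_nat m * u a = u e" by blast
  moreover obtain e' where "u e + u a = u e'" using u_add by blast
  ultimately show ?case by (metis distrib_right mult_1 of_nat_Suc add.commute)
qed

lemma u_neg: "\<exists>e. - u a = u e"
proof -
  obtain e where e: "of_nat (p - 1) * u a = u e" using u_smul by blast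
  have "of_nat (p - 1) * u a + u a = of_nat p * u a"
    using p_ge2 by (simp add: of_nat_diff algebra_simps)
  hence "of_nat (p - 1) * u a + u a = 0" by (simp add: of_nat_p)
  hence "- u a = of_nat (p - 1) * u a" by (subst neg_eq_iff_add_eq_0) (simp add: add.commute)
  thus ?thesis using e by metis
qed

lemma u_shift: "ipr * u k = u (q * k)"
  using u_rec[of "q * k"] q_ge2 p_ge2 nu_mod[of "q * k"] by simp

lemma u_comb: "\<exists>m. u m = ipr * u k + u l - u j"
proof -
  obtain e1 where e1: "- u j = u e1" using u_neg by blast
  obtain e2 where e2: "u (q * k) + u l = u e2" using u_add by blast
  obtain e3 where e3: "u e2 + u e1 = u e3" using u_add by blast
  show ?thesis using e1 e2 e3 u_shift[of k] by (metis diff_conv_add_uminus)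
qed

end



context lfa begin

lemma av0[simp]: "absv 0 = 0" and av_nonneg[simp]: "0 \<le> absv x"
  and av_mult: "absv (x * y) = absv x * absv y"
  and av_ultra: "absv (x + y) \<le> max (absv x) (absv y)"
  and av_eq0: "absv x = 0 \<longleftrightarrow> x = 0"
  and open_iff: "open S \<longleftrightarrow> (\<forall>x\<in>S. \<exists>e>0. \<forall>y. absv (y - x) < e \<longrightarrow> y \<in> S)"
  and compactD: "compact {x. absv x \<le> 1}"
  and av_pr: "absv pr = 1 / real q"
  and av_lt1: "absv x < 1 \<Longrightarrow> absv x \<le> absv pr"
  using K unfolding local_field_char_p_def by auto

lemma av_pos: "x \<noteq> 0 \<Longrightarrow> 0 < absv x" by (metis av_eq0 av_nonneg less_eq_real_def)

lemma av1[simp]: "absv 1 = 1"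
proof -
  have "absv 1 = absv 1 * absv 1" using av_mult[of 1 1] by simp
  moreover have "absv 1 \<noteq> 0" using av_eq0[of 1] by simp
  ultimately show ?thesis by simp
qed

lemma av_m1: "absv (-1) = 1"
proof -
  have "absv (-1) * absv (-1) = 1" using av_mult[of "-1" "-1"] by simp
  hence "absv (-1) ^ 2 = 1" by (simp add: power2_eq_square)
  hence "absv (-1) = 1 \<or> absv (-1) = -1" using power2_eq_1_iff by blast
  thus ?thesis using av_nonneg[of "-1"] by linarith
qed

lemma av_neg[simp]: "absv (- x) = absv x"
  using av_mult[of "-1" x] av_m1 by simp

lemma av_sym: "absv (x - y) = absv (y - x)"
  using av_neg[of "x - y"] by simp

lemma av_inv: "absv (inverse x) = inverse (absv x)"
proof (cases "x = 0")
  case False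
  have "absv x * absv (inverse x) = 1" using av_mult[of x "inverse x"] False by simp
  thus ?thesis by (metis inverse_unique)
qed simp

lemma av_div: "absv (x / y) = absv x / absv y"
  by (simp add: divide_inverse av_mult av_inv)

lemma av_pow: "absv (x ^ n) = absv x ^ n"
  by (induction n) (simp_all add: av_mult)

lemma av_diff: "absv (x - y) \<le> max (absv x) (absv y)"
  using av_ultra[of x "-y"] by simp

lemma av_tri: "absv (x - z) \<le> max (absv (x - y)) (absv (y - z))"
  using av_ultra[of "x - y" "y - z"] by simp

lemma pr_ne0: "pr \<noteq> 0"
proof
  assume "pr = 0" hence "absv pr = 0" by simp
  thus False using av_pr q_ge2 p_ge2 by simp
qed

lemma av_pr_pos: "0 < absv pr" using av_pos pr_ne0 by simp
lemma rq: "2 \<le> real q" using q_ge2 by (metis of_nat_le_iff of_nat_numeral)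
lemma av_pr_lt1: "absv pr < 1"
proof -
  have "1 / real q < 1" using rq p_ge2 by (subst divide_less_eq_1_pos) auto
  thus ?thesis using av_pr by simp
qed
lemma av_ipr: "absv ipr = real q" using av_inv av_pr by simp

lemma av_of_nat: "absv (of_nat n) \<le> 1"
proof (induction n)
  case (Suc n) then show ?case using av_ultra[of 1 "of_nat n"] by simp
qed simp

lemma av_sum_le: "finite A \<Longrightarrow> 0 \<le> r \<Longrightarrow> (\<forall>i\<in>A. absv (f i) \<le> r) \<Longrightarrow> absv (sum f A) \<le> r"
proof (induction A rule: finite_induct)
  case (insert x F)
  have mx: "max (absv (f x)) (absv (sum f F)) \<le> r" using insert by simp
  have "absv (f x + sum f F) \<le> r" using order_trans[OF av_ultra mx] .
  thus ?case using insert(1,2) by simp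
qed simp

lemma zeta_1: "\<forall>j<c. absv (zeta j) = 1" and zeta_uniq: "\<And>a b. (\<forall>j<c. a j < p) \<Longrightarrow> (\<forall>j<c. b j < p) \<Longrightarrow>
        absv (zeta_comb c zeta a - zeta_comb c zeta b) < 1 \<Longrightarrow> (\<forall>j<c. a j = b j)"
  and zeta_ex: "\<And>x. absv x \<le> 1 \<Longrightarrow> (\<exists>a. (\<forall>j<c. a j < p) \<and> absv (x - zeta_comb c zeta a) < 1)"
  using Z unfolding residue_basis_def by blast+

lemma av_zc: "absv (zeta_comb c zeta d) \<le> 1"
  unfolding zeta_comb_def
proof (rule av_sum_le)
  show "\<forall>i\<in>{..<c}. absv (of_nat (d i) * zeta i) \<le> 1"
  proof
    fix i assume "i \<in> {..<c}"
    hence "absv (zeta i) = 1" using zeta_1 by simp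
    thus "absv (of_nat (d i) * zeta i) \<le> 1" using av_of_nat[of "d i"] by (simp add: av_mult)
  qed
qed auto

lemma cont_affine: fixes \<alpha> \<beta> :: 'k assumes "\<alpha> \<noteq> 0" shows "continuous_on UNIV (\<lambda>x. \<alpha> * x + \<beta>)"
  unfolding continuous_on_open_vimage[OF open_UNIV]
proof (intro allI impI)
  fix S :: "'k set" assume S: "open S"
  have S': "\<forall>x\<in>S. \<exists>e>0. \<forall>y. absv (y - x) < e \<longrightarrow> y \<in> S" using S by (simp only: open_iff)
  have ap: "0 < absv \<alpha>" using av_pos assms by simp
  have "\<forall>x\<in>(\<lambda>x. \<alpha> * x + \<beta>) -` S \<inter> UNIV. \<exists>e>0. \<forall>y. absv (y - x) < e \<longrightarrow> y \<in> (\<lambda>x. \<alpha> * x + \<beta>) -` S \<inter> UNIV"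
  proof
    fix x assume "x \<in> (\<lambda>x. \<alpha> * x + \<beta>) -` S \<inter> UNIV"
    hence "\<alpha> * x + \<beta> \<in> S" by simp
    then obtain e where e: "e > 0" "\<And>y. absv (y - (\<alpha> * x + \<beta>)) < e \<Longrightarrow> y \<in> S"
      using S' by blast
    show "\<exists>e>0. \<forall>y. absv (y - x) < e \<longrightarrow> y \<in> (\<lambda>x. \<alpha> * x + \<beta>) -` S \<inter> UNIV"
    proof (intro exI[of _ "e / absv \<alpha>"] conjI allI impI)
      show "0 < e / absv \<alpha>" using e ap by simp
      fix y assume "absv (y - x) < e / absv \<alpha>"
      hence lt: "absv \<alpha> * absv (y - x) < e" using ap by (simp add: pos_less_divide_eq mult.commute)
      have eq: "(\<alpha> * y + \<beta>) - (\<alpha> * x + \<beta>) = \<alpha> * (y - x)" by (simp add: right_diff_distrib)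
      have "absv ((\<alpha> * y + \<beta>) - (\<alpha> * x + \<beta>)) < e" unfolding eq av_mult using lt .
      hence "\<alpha> * y + \<beta> \<in> S" by (rule e(2))
      thus "y \<in> (\<lambda>x. \<alpha> * x + \<beta>) -` S \<inter> UNIV" by simp
    qed
  qed
  thus "open ((\<lambda>x. \<alpha> * x + \<beta>) -` S \<inter> UNIV)" by (simp only: open_iff)
qed

end

locale lfm = lfa absv p c pr zeta
  for absv :: "'k::{field,topological_space} \<Rightarrow> real" and p c pr zeta +
  fixes M :: "'k measure"
  assumes H: "haar_measure absv M"
begin

lemma sets_M: "sets M = sets borel" and M_trans: "\<And>a A. A \<in> sets M \<Longrightarrow> emeasure M ((\<lambda>x. a + x) ` A) = emeasure M A"
  and M_D: "emeasure M {x. absv x \<le> 1} = 1"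
  using H unfolding haar_measure_def by auto

lemma space_M[simp]: "space M = UNIV"
  using sets_eq_imp_space_eq[OF sets_M] by simp

lemma meas_affine: fixes \<alpha> \<beta> :: 'k assumes "\<alpha> \<noteq> 0" shows "(\<lambda>x. \<alpha> * x + \<beta>) \<in> measurable M M"
proof -
  have "(\<lambda>x. \<alpha> * x + \<beta>) \<in> measurable borel borel"
    by (rule borel_measurable_continuous_onI[OF cont_affine[OF assms]])
  thus ?thesis using measurable_cong_sets[OF sets_M sets_M] by simp
qed

lemma meas_trans: "(\<lambda>x. x + t) \<in> measurable M M"
  using meas_affine[of 1 t] by simp

lemma meas_dil: "(\<lambda>x. \<alpha> * x - t) \<in> measurable M M" if "\<alpha> \<noteq> 0"
  using meas_affine[of \<alpha> "-t"] that by simp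

lemma open_meas: "open S \<Longrightarrow> S \<in> sets M" using sets_M by simp

lemma distr_trans: "distr M M (\<lambda>x. x + t) = M"
proof (rule measure_eqI)
  fix A assume A: "A \<in> sets (distr M M (\<lambda>x. x + t))"
  hence A': "A \<in> sets M" by simp
  have "(\<lambda>x. x + t) -` A \<inter> space M = (\<lambda>x. (-t) + x) ` A"
  proof safe
    fix x assume "x + t \<in> A"
    thus "x \<in> (\<lambda>x. (-t) + x) ` A" by (intro image_eqI[of _ _ "x + t"]) auto
  qed auto
  thus "emeasure (distr M M (\<lambda>x. x + t)) A = emeasure M A"
    using emeasure_distr[OF meas_trans A'] M_trans[OF A', of "-t"] by simp
qed simp

lemma int_trans:
  fixes f :: "'k \<Rightarrow> 'b::{banach, second_countable_topology}"
  assumes "f \<in> borel_measurable M"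
  shows "(LINT x|M. f (x + t)) = (LINT x|M. f x)"
  using integral_distr[OF meas_trans assms, of t] distr_trans by simp

lemma integrable_trans:
  fixes f :: "'k \<Rightarrow> 'b::{banach, second_countable_topology}"
  assumes "f \<in> borel_measurable M"
  shows "integrable M (\<lambda>x. f (x + t)) \<longleftrightarrow> integrable M f"
  using integrable_distr_eq[OF meas_trans assms, of t] distr_trans by simp

end



context lfa begin

definition bl :: "'k \<Rightarrow> nat \<Rightarrow> 'k set" where
  "bl a m = {x. absv (x - a) \<le> absv pr ^ m}"

lemma pr_pow_mono: "m \<le> n \<Longrightarrow> absv pr ^ n \<le> absv pr ^ m"
  using av_pr_pos av_pr_lt1 by (intro power_decreasing) auto

lemma pr_pow_pos: "0 < absv pr ^ m" using av_pr_pos by simp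

lemma open_bl: "open (bl a m)"
  unfolding open_iff bl_def
proof safe
  fix x assume x: "absv (x - a) \<le> absv pr ^ m"
  show "\<exists>e>0. \<forall>y. absv (y - x) < e \<longrightarrow> y \<in> {x. absv (x - a) \<le> absv pr ^ m}"
  proof (intro exI[of _ "absv pr ^ m"] conjI allI impI)
    fix y assume "absv (y - x) < absv pr ^ m"
    thus "y \<in> {x. absv (x - a) \<le> absv pr ^ m}"
      using av_tri[of y a x] x by simp
  qed (rule pr_pow_pos)
qed

lemma bl_center: "y \<in> bl a m \<Longrightarrow> bl y m = bl a m"
  unfolding bl_def
proof safe
  fix x assume "absv (y - a) \<le> absv pr ^ m" "absv (x - y) \<le> absv pr ^ m"
  thus "absv (x - a) \<le> absv pr ^ m" using av_tri[of x a y] by simp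
next
  fix x assume "absv (y - a) \<le> absv pr ^ m" "absv (x - a) \<le> absv pr ^ m"
  thus "absv (x - y) \<le> absv pr ^ m" using av_tri[of x y a] av_sym[of y a] by simp
qed

lemma bl_mono: "m \<le> n \<Longrightarrow> bl a n \<subseteq> bl a m"
  unfolding bl_def using pr_pow_mono by (auto intro: order_trans)

lemma bl_trans: "bl a m = (\<lambda>x. a + x) ` bl 0 m"
  unfolding bl_def by (auto simp: image_iff) (metis add.commute diff_add_cancel)

lemma av_le_pow: "\<exists>N. absv x \<le> real q ^ N"
proof -
  obtain N where "absv x < real q ^ N" using real_arch_pow[of "real q" "absv x"] rq by auto
  thus ?thesis by (auto intro: less_imp_le)
qed

lemma u_cover: "\<exists>k. absv (x - u k) \<le> 1"
proof -
  obtain N where "absv x \<le> real q ^ N" using av_le_pow by blast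
  thus ?thesis
  proof (induction N arbitrary: x)
    case 0 then show ?case by (intro exI[of _ 0]) simp
  next
    case (Suc N)
    have "absv (pr * x) = absv x / real q" using av_pr by (simp add: av_mult)
    also have "\<dots> \<le> real q ^ N"
    proof -
      have Q: "0 < real q" using rq by linarith
      show ?thesis using Suc.prems by (simp only: pos_divide_le_eq[OF Q]) (simp add: mult.commute)
    qed
    finally obtain k where k: "absv (pr * x - u k) \<le> 1" using Suc.IH by blast
    define d where "d = pr * x - u k"
    obtain a where a: "\<forall>j<c. a j < p" "absv (d - zeta_comb c zeta a) < 1"
      using zeta_ex[of d] k d_def by blast
    have a2: "absv (d - zeta_comb c zeta a) \<le> absv pr" using av_lt1 a(2) .
    define n where "n = (\<Sum>i<c. a i * p ^ i) + q * k"
    have lt: "(\<Sum>i<c. a i * p ^ i) < q" using digits_sum_bound[OF a(1)] .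
    have "nu n = nu (\<Sum>i<c. a i * p ^ i)"
      using nu_mod[of n] nu_mod[of "\<Sum>i<c. a i * p ^ i"] lt unfolding n_def by simp
    also have "\<dots> = zeta_comb c zeta a" by (rule nu_comb[OF a(1)])
    finally have nun: "nu n = zeta_comb c zeta a" .
    have ndiv: "n div q = k" unfolding n_def using lt by (rule div_aux)
    have un: "u n = ipr * (zeta_comb c zeta a + u k)" using u_rec[of n] nun ndiv by simp
    have "x - u n = ipr * (d - zeta_comb c zeta a)"
      using un pr_ne0 unfolding d_def by (simp add: field_simps)
    hence "absv (x - u n) = real q * absv (d - zeta_comb c zeta a)" by (simp add: av_mult av_ipr)
    also have "\<dots> \<le> real q * absv pr" using a2 by (intro mult_left_mono) auto
    also have "\<dots> = 1" using av_pr rq p_ge2 by simp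
    finally show ?case by blast
  qed
qed

definition rho :: "nat \<Rightarrow> 'k" where "rho i = zeta_comb c zeta (\<lambda>j. i div p ^ j mod p)"

lemma rho_digits: assumes "\<forall>j<c. a j < p"
  shows "rho (\<Sum>i<c. a i * p ^ i) = zeta_comb c zeta a"
  unfolding rho_def zeta_comb_def using digits_extract[OF assms] by (intro sum.cong) auto

lemma av_rho: "absv (rho i) \<le> 1" unfolding rho_def by (rule av_zc)

lemma rho_inj: assumes "i < q" "i' < q" "absv (rho i - rho i') < 1" shows "i = i'"
proof -
  have "\<forall>j<c. i div p ^ j mod p = i' div p ^ j mod p"
    using zeta_uniq[of "\<lambda>j. i div p ^ j mod p" "\<lambda>j. i' div p ^ j mod p"] assms(3) p_ge2
    unfolding rho_def by auto
  hence "(\<Sum>j<c. (i div p ^ j mod p) * p ^ j) = (\<Sum>j<c. (i' div p ^ j mod p) * p ^ j)" by simp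
  thus ?thesis using digits_expand[OF assms(1)] digits_expand[OF assms(2)] by simp
qed

lemma bl0_split: "bl 0 m = (\<Union>i<q. (\<lambda>x. pr ^ m * rho i + x) ` bl 0 (Suc m))"
proof safe
  fix x assume x: "x \<in> bl 0 m"
  define y where "y = x / pr ^ m"
  have "absv y \<le> 1" using x pr_pow_pos[of m] unfolding y_def bl_def
    by (simp add: av_div av_pow)
  then obtain a where a: "\<forall>j<c. a j < p" "absv (y - zeta_comb c zeta a) < 1" using zeta_ex by blast
  define i where "i = (\<Sum>i<c. a i * p ^ i)"
  have i: "i < q" "rho i = zeta_comb c zeta a" unfolding i_def
    using digits_sum_bound[OF a(1)] rho_digits[OF a(1)] by auto
  have "absv (y - rho i) \<le> absv pr" using av_lt1 a(2) i(2) by simp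
  moreover have "x - pr ^ m * rho i = pr ^ m * (y - rho i)" unfolding y_def using pr_ne0
    by (simp add: field_simps)
  ultimately have "absv (x - pr ^ m * rho i) \<le> absv pr ^ Suc m"
    using pr_pow_pos[of m] by (simp add: av_mult av_pow)
  hence "x - pr ^ m * rho i \<in> bl 0 (Suc m)" unfolding bl_def by simp
  thus "x \<in> (\<Union>i<q. (\<lambda>x. pr ^ m * rho i + x) ` bl 0 (Suc m))"
    using i(1) by (auto intro!: bexI[of _ i] image_eqI[of _ _ "x - pr ^ m * rho i"])
next
  fix i e assume "i < q" "e \<in> bl 0 (Suc m)"
  hence e: "absv e \<le> absv pr ^ Suc m" by (simp add: bl_def)
  have "absv (pr ^ m * rho i) \<le> absv pr ^ m"
    using av_rho[of i] pr_pow_pos[of m] by (simp add: av_mult av_pow mult_left_le)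
  moreover have "absv e \<le> absv pr ^ m" using e pr_pow_mono[of m "Suc m"] by simp
  ultimately show "pr ^ m * rho i + e \<in> bl 0 m"
    unfolding bl_def using av_ultra[of "pr ^ m * rho i" e] by simp
qed

lemma bl0_disj: "disjoint_family_on (\<lambda>i. (\<lambda>x. pr ^ m * rho i + x) ` bl 0 (Suc m)) {..<q}"
  unfolding disjoint_family_on_def
proof (intro ballI impI)
  fix i i' assume ii: "i \<in> {..<q}" "i' \<in> {..<q}" "i \<noteq> i'"
  show "(\<lambda>x. pr ^ m * rho i + x) ` bl 0 (Suc m) \<inter> (\<lambda>x. pr ^ m * rho i' + x) ` bl 0 (Suc m) = {}"
  proof (rule ccontr)
    assume "\<not> ?thesis"
    then obtain e e' where ee: "absv e \<le> absv pr ^ Suc m" "absv e' \<le> absv pr ^ Suc m"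
      "pr ^ m * rho i + e = pr ^ m * rho i' + e'" by (auto simp: bl_def)
    have "pr ^ m * (rho i - rho i') = e' - e" using ee(3) by (simp add: algebra_simps)
    hence "absv (pr ^ m * (rho i - rho i')) \<le> absv pr ^ Suc m"
      using av_diff[of e' e] ee(1,2) by simp
    hence "absv pr ^ m * absv (rho i - rho i') \<le> absv pr ^ m * absv pr"
      by (simp add: av_mult av_pow mult.commute)
    hence "absv (rho i - rho i') \<le> absv pr" using pr_pow_pos[of m] by simp
    hence "absv (rho i - rho i') < 1" using av_pr_lt1 by simp
    thus False using rho_inj ii by auto
  qed
qed

end

context lfm begin

lemma bl_sets[measurable]: "bl a m \<in> sets M" using open_meas open_bl by simp

lemma meas_bl0: "emeasure M (bl 0 m) = ennreal (1 / real q ^ m)"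
proof (induction m)
  case 0
  have "bl 0 0 = {x. absv x \<le> 1}" by (simp add: bl_def)
  then show ?case using M_D by simp
next
  case (Suc m)
  have "emeasure M (bl 0 m) = (\<Sum>i<q. emeasure M ((\<lambda>x. pr ^ m * rho i + x) ` bl 0 (Suc m)))"
  proof (subst bl0_split, rule sum_emeasure[symmetric])
    show "(\<lambda>i. (\<lambda>x. pr ^ m * rho i + x) ` bl 0 (Suc m)) ` {..<q} \<subseteq> sets M"
      using bl_sets by (auto simp: bl_trans[of _ "Suc m", symmetric])
  qed (use bl0_disj in auto)
  also have "\<dots> = of_nat q * emeasure M (bl 0 (Suc m))"
    using M_trans[OF bl_sets] by simp
  finally have eq: "ennreal (1 / real q ^ m) = of_nat q * emeasure M (bl 0 (Suc m))"
    using Suc.IH by simp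
  have "of_nat q * ennreal (1 / real q ^ Suc m) = ennreal (1 / real q ^ m)"
    using rq by (simp add: ennreal_of_nat_eq_real_of_nat ennreal_mult''[symmetric] field_simps)
  hence "of_nat q * emeasure M (bl 0 (Suc m)) = of_nat q * ennreal (1 / real q ^ Suc m)"
    using eq by simp
  hence "ennreal (real q) * emeasure M (bl 0 (Suc m)) = ennreal (real q) * ennreal (1 / real q ^ Suc m)"
    by (simp only: ennreal_of_nat_eq_real_of_nat)
  moreover have "ennreal (real q) \<noteq> 0" "ennreal (real q) \<noteq> top" using rq by auto
  ultimately show ?case using ennreal_mult_cancel_left by blast
qed

lemma meas_bl: "emeasure M (bl a m) = ennreal (1 / real q ^ m)"
  using M_trans[OF bl_sets, of a 0 m] meas_bl0 bl_trans[of a m] by simp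

definition Bs :: "'k set set" where
  "Bs = insert {} ((\<lambda>(k, m). bl (pr ^ m * u k) m) ` UNIV)"

lemma Bs_countable: "countable Bs" unfolding Bs_def by simp

lemma bl_in_Bs: "\<exists>k. bl a m = bl (pr ^ m * u k) m"
proof -
  obtain k where k: "absv (a / pr ^ m - u k) \<le> 1" using u_cover by blast
  have "a - pr ^ m * u k = pr ^ m * (a / pr ^ m - u k)" using pr_ne0 by (simp add: field_simps)
  hence "absv (a - pr ^ m * u k) \<le> absv pr ^ m"
    using k pr_pow_pos[of m] by (simp add: av_mult av_pow mult_left_le)
  hence "a \<in> bl (pr ^ m * u k) m" by (simp add: bl_def)
  thus ?thesis using bl_center by blast
qed

lemma bl_Bs: "bl a m \<in> Bs" using bl_in_Bs[of a m] unfolding Bs_def by auto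

lemma Bs_cases: "X \<in> Bs \<Longrightarrow> X = {} \<or> (\<exists>a m. X = bl a m)"
  unfolding Bs_def by auto

lemma Bs_basis: "topological_basis Bs"
proof (rule topological_basisI)
  fix B assume "B \<in> Bs" thus "open B" using Bs_cases open_bl by auto
next
  fix O' :: "'k set" and x :: 'k assume "open O'" "x \<in> O'"
  then obtain e where e: "e > 0" "\<forall>y. absv (y - x) < e \<longrightarrow> y \<in> O'" using open_iff by blast
  obtain m where m: "absv pr ^ m < e" using real_arch_pow_inv[OF e(1) av_pr_lt1] by blast
  have "bl x m \<subseteq> O'" using e(2) m by (auto simp: bl_def)
  moreover have "x \<in> bl x m" by (simp add: bl_def)
  ultimately show "\<exists>B'\<in>Bs. x \<in> B' \<and> B' \<subseteq> O'" using bl_Bs by blast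
qed

lemma sets_M_Bs: "sets M = sigma_sets UNIV Bs"
proof -
  have "sets M = sets (sigma UNIV Bs)" using borel_eq_countable_basis[OF Bs_countable Bs_basis] sets_M by simp
  also have "\<dots> = sigma_sets UNIV Bs" by (rule sets_measure_of) simp
  finally show ?thesis .
qed

lemma Bs_Int_stable: "Int_stable Bs"
  unfolding Int_stable_def
proof (intro ballI)
  fix X Y assume XY: "X \<in> Bs" "Y \<in> Bs"
  show "X \<inter> Y \<in> Bs"
  proof (cases "X \<inter> Y = {}")
    case True then show ?thesis by (simp add: Bs_def)
  next
    case False
    then obtain z where z: "z \<in> X" "z \<in> Y" by blast
    obtain a m where X: "X = bl a m" using XY(1) Bs_cases z by blast
    obtain b n where Y: "Y = bl b n" using XY(2) Bs_cases z by blast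
    have X': "X = bl z m" using X z bl_center by simp
    have Y': "Y = bl z n" using Y z bl_center by simp
    show ?thesis
    proof (cases "m \<le> n")
      case True
      hence "X \<inter> Y = Y" using X' Y' bl_mono by auto
      thus ?thesis using XY by simp
    next
      case False
      hence "X \<inter> Y = X" using X' Y' bl_mono[of n m] by auto
      thus ?thesis using XY by simp
    qed
  qed
qed

lemma meas_ipr: "(\<lambda>x. ipr * x) \<in> measurable M M"
  using meas_affine[of ipr 0] pr_ne0 by simp

lemma pre_dil: "(\<lambda>x. ipr * x) -` bl a m = bl (pr * a) (Suc m)"
proof -
  have "absv (ipr * x - a) = absv (x - pr * a) / absv pr" for x
  proof -
    have "ipr * x - a = (x - pr * a) / pr" using pr_ne0 by (simp add: field_simps)
    thus ?thesis by (simp add: av_div)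
  qed
  thus ?thesis unfolding bl_def using av_pr_pos by (auto simp: divide_le_eq mult.commute)
qed

lemma emeasure_dil: "emeasure (distr M M (\<lambda>x. ipr * x)) (bl a m) = ennreal (1 / real q ^ Suc m)"
  using emeasure_distr[OF meas_ipr bl_sets[of a m]] pre_dil meas_bl by simp

lemma distr_dil: "distr M M (\<lambda>x. ipr * x) = density M (\<lambda>_. ennreal (1 / real q))"
proof (rule measure_eqI_generator_eq[OF Bs_Int_stable, of UNIV])
  show "Bs \<subseteq> Pow UNIV" by simp
  show "sets (distr M M (\<lambda>x. ipr * x)) = sigma_sets UNIV Bs" using sets_M_Bs by simp
  show "sets (density M (\<lambda>_. ennreal (1 / real q))) = sigma_sets UNIV Bs" using sets_M_Bs by simp
  show "range (\<lambda>k. bl (u k) 0) \<subseteq> Bs" using bl_Bs by auto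
  show "(\<Union>k. bl (u k) 0) = UNIV"
  proof -
    have "x \<in> (\<Union>k. bl (u k) 0)" for x using u_cover[of x] by (auto simp: bl_def av_sym)
    thus ?thesis by auto
  qed
  fix k show "emeasure (distr M M (\<lambda>x. ipr * x)) (bl (u k) 0) \<noteq> \<infinity>"
    using emeasure_dil by simp
next
  fix X assume "X \<in> Bs"
  then consider "X = {}" | a m where "X = bl a m" using Bs_cases by blast
  thus "emeasure (distr M M (\<lambda>x. ipr * x)) X = emeasure (density M (\<lambda>_. ennreal (1 / real q))) X"
  proof cases
    case 2
    have "emeasure (density M (\<lambda>_. ennreal (1 / real q))) X = ennreal (1 / real q) * ennreal (1 / real q ^ m)"
      using emeasure_density_const[OF bl_sets[of a m]] meas_bl 2 by simp
    also have "\<dots> = ennreal (1 / real q ^ Suc m)" using rq by (simp add: ennreal_mult''[symmetric])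
    finally show ?thesis using emeasure_dil 2 by simp
  qed simp
qed

lemma int_dil:
  fixes f :: "'k \<Rightarrow> 'b::{banach, second_countable_topology}"
  assumes f: "f \<in> borel_measurable M"
  shows "(LINT x|M. f (ipr * x)) = (1 / real q) *\<^sub>R (LINT x|M. f x)"
proof -
  have "(LINT x|M. f (ipr * x)) = integral\<^sup>L (density M (\<lambda>_. ennreal (1 / real q))) f"
    using integral_distr[OF meas_ipr f] distr_dil by simp
  also have "\<dots> = (LINT x|M. (1 / real q) *\<^sub>R f x)"
    using integral_density[OF f, of "\<lambda>_. 1 / real q"] rq by simp
  finally show ?thesis by simp
qed

lemma integrable_dil:
  fixes f :: "'k \<Rightarrow> 'b::{banach, second_countable_topology}"
  assumes f: "f \<in> borel_measurable M"
  shows "integrable M (\<lambda>x. f (ipr * x)) \<longleftrightarrow> integrable M f"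
proof -
  have "integrable M (\<lambda>x. f (ipr * x)) \<longleftrightarrow> integrable (density M (\<lambda>_. ennreal (1 / real q))) f"
    using integrable_distr_eq[OF meas_ipr f] distr_dil by simp
  also have "\<dots> \<longleftrightarrow> integrable M (\<lambda>x. (1 / real q) *\<^sub>R f x)"
    using integrable_density[OF f, of "\<lambda>_. 1 / real q"] rq by simp
  also have "\<dots> \<longleftrightarrow> integrable M f"
  proof
    assume "integrable M (\<lambda>x. (1 / real q) *\<^sub>R f x)"
    hence "integrable M (\<lambda>x. real q *\<^sub>R ((1 / real q) *\<^sub>R f x))" by (rule integrable_scaleR_right)
    moreover have "real q *\<^sub>R ((1 / real q) *\<^sub>R f x) = f x" for x using rq by simp
    ultimately show "integrable M f" by simp
  qed (rule integrable_scaleR_right)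
  finally show ?thesis .
qed

end



lemma meas_cnj[measurable]:
  assumes "f \<in> borel_measurable M" shows "(\<lambda>x. cnj (f x)) \<in> borel_measurable M"
proof -
  have "cnj \<in> borel_measurable borel"
    by (rule borel_measurable_continuous_onI) (intro continuous_on_cnj continuous_on_id)
  thus ?thesis using measurable_compose[OF assms] by blast
qed

lemma L2_meas: "L2 M f \<Longrightarrow> f \<in> borel_measurable M" by (simp add: L2_def)
lemma L2_int: "L2 M f \<Longrightarrow> integrable M (\<lambda>x. (cmod (f x))\<^sup>2)" by (simp add: L2_def)

lemma ab_le: "0 \<le> (a::real) \<Longrightarrow> 0 \<le> b \<Longrightarrow> a * b \<le> a\<^sup>2 + b\<^sup>2"
proof -
  assume a: "0 \<le> a" and b: "0 \<le> b"
  have h1: "0 \<le> a * b" using a b by simp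
  have h2: "2 * a * b \<le> a\<^sup>2 + b\<^sup>2" by (rule sum_squares_bound)
  have "2 * a * b = 2 * (a * b)" by simp
  thus ?thesis using h1 h2 by linarith
qed

lemma prod_int:
  assumes f: "L2 M f" and g: "L2 M g"
  shows "integrable M (\<lambda>x. f x * cnj (g x))"
proof (rule Bochner_Integration.integrable_bound)
  show "integrable M (\<lambda>x. (cmod (f x))\<^sup>2 + (cmod (g x))\<^sup>2)"
    using L2_int[OF f] L2_int[OF g] by simp
  have [measurable]: "f \<in> borel_measurable M" "g \<in> borel_measurable M" using f g by (auto simp: L2_def)
  show "(\<lambda>x. f x * cnj (g x)) \<in> borel_measurable M" by measurable
  show "AE x in M. norm (f x * cnj (g x)) \<le> norm ((cmod (f x))\<^sup>2 + (cmod (g x))\<^sup>2)"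
    by (auto simp: norm_mult intro!: ab_le)
qed

lemma L2_add:
  assumes f: "L2 M f" and g: "L2 M g"
  shows "L2 M (\<lambda>x. f x + g x)"
  unfolding L2_def
proof
  have [measurable]: "f \<in> borel_measurable M" "g \<in> borel_measurable M" using f g by (auto simp: L2_def)
  show "(\<lambda>x. f x + g x) \<in> borel_measurable M" by measurable
  show "integrable M (\<lambda>x. (cmod (f x + g x))\<^sup>2)"
  proof (rule Bochner_Integration.integrable_bound)
    show "integrable M (\<lambda>x. 2 * (cmod (f x))\<^sup>2 + 2 * (cmod (g x))\<^sup>2)"
      using L2_int[OF f] L2_int[OF g] by simp
    show "(\<lambda>x. (cmod (f x + g x))\<^sup>2) \<in> borel_measurable M" by measurable
    show "AE x in M. norm ((cmod (f x + g x))\<^sup>2) \<le> norm (2 * (cmod (f x))\<^sup>2 + 2 * (cmod (g x))\<^sup>2)"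
    proof (intro AE_I2)
      fix x
      have t: "cmod (f x + g x) \<le> cmod (f x) + cmod (g x)" by (rule norm_triangle_ineq)
      have "(cmod (f x + g x))\<^sup>2 \<le> (cmod (f x) + cmod (g x))\<^sup>2"
        using t by (intro power_mono) auto
      also have "\<dots> \<le> 2 * (cmod (f x))\<^sup>2 + 2 * (cmod (g x))\<^sup>2"
        using sum_squares_bound[of "cmod (f x)" "cmod (g x)"] by (simp add: power2_sum)
      finally show "norm ((cmod (f x + g x))\<^sup>2) \<le> norm (2 * (cmod (f x))\<^sup>2 + 2 * (cmod (g x))\<^sup>2)"
        by simp
    qed
  qed
qed

lemma L2_cmult:
  assumes f: "L2 M f" shows "L2 M (\<lambda>x. a * f x)"
  unfolding L2_def
proof
  have [measurable]: "f \<in> borel_measurable M" using f by (auto simp: L2_def)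
  show "(\<lambda>x. a * f x) \<in> borel_measurable M" by measurable
  have "integrable M (\<lambda>x. (cmod a)\<^sup>2 * (cmod (f x))\<^sup>2)" using L2_int[OF f] by simp
  thus "integrable M (\<lambda>x. (cmod (a * f x))\<^sup>2)" by (simp add: norm_mult power_mult_distrib)
qed

lemma L2_diff:
  assumes f: "L2 M f" and g: "L2 M g" shows "L2 M (\<lambda>x. f x - g x)"
  using L2_add[OF f L2_cmult[OF g, of "-1"]] by simp

lemma L2_zero: "L2 M (\<lambda>x. 0)" by (simp add: L2_def)

lemma L2_sum: "(\<And>i. i \<in> I \<Longrightarrow> L2 M (f i)) \<Longrightarrow> L2 M (\<lambda>x. \<Sum>i\<in>I. f i x)"
proof (induction I rule: infinite_finite_induct)
  case (infinite A) then show ?case by (simp add: L2_zero)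
next
  case empty then show ?case by (simp add: L2_zero)
next
  case (insert a A) then show ?case by (simp add: L2_add)
qed

lemma nsq_nonneg: "0 \<le> nsq M f" unfolding nsq_def by (rule integral_nonneg_AE) simp

lemma CS:
  assumes f: "L2 M f" and g: "L2 M g"
  shows "cmod (ip M f g) \<le> sqrt (nsq M f) * sqrt (nsq M g)"
proof -
  have [measurable]: "f \<in> borel_measurable M" "g \<in> borel_measurable M" using f g by (auto simp: L2_def)
  have "ennreal (cmod (ip M f g)) \<le> (\<integral>\<^sup>+x. norm (f x * cnj (g x)) \<partial>M)"
    unfolding ip_def by (rule integral_norm_bound_ennreal[OF prod_int[OF f g]])
  also have "\<dots> = (\<integral>\<^sup>+x. ennreal (cmod (f x)) * ennreal (cmod (g x)) \<partial>M)"
    by (simp add: norm_mult ennreal_mult'')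
  finally have 1: "ennreal (cmod (ip M f g)) ^ 2 \<le> (\<integral>\<^sup>+x. ennreal (cmod (f x)) * ennreal (cmod (g x)) \<partial>M) ^ 2"
    by (intro power_mono) auto
  also have "\<dots> \<le> (\<integral>\<^sup>+x. ennreal (cmod (f x)) ^ 2 \<partial>M) * (\<integral>\<^sup>+x. ennreal (cmod (g x)) ^ 2 \<partial>M)"
    by (rule Cauchy_Schwarz_nn_integral) measurable
  also have "(\<integral>\<^sup>+x. ennreal (cmod (f x)) ^ 2 \<partial>M) = ennreal (nsq M f)"
    unfolding nsq_def using nn_integral_eq_integral[OF L2_int[OF f]] by (simp add: ennreal_power)
  also have "(\<integral>\<^sup>+x. ennreal (cmod (g x)) ^ 2 \<partial>M) = ennreal (nsq M g)"
    unfolding nsq_def using nn_integral_eq_integral[OF L2_int[OF g]] by (simp add: ennreal_power)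
  finally have "ennreal ((cmod (ip M f g))\<^sup>2) \<le> ennreal (nsq M f * nsq M g)"
    using nsq_nonneg[of M f] nsq_nonneg[of M g] by (simp add: ennreal_power ennreal_mult'')
  hence "(cmod (ip M f g))\<^sup>2 \<le> nsq M f * nsq M g"
    using nsq_nonneg[of M f] nsq_nonneg[of M g] by (simp add: ennreal_le_iff)
  hence "cmod (ip M f g) \<le> sqrt (nsq M f * nsq M g)" by (rule real_le_rsqrt)
  thus ?thesis by (simp add: real_sqrt_mult)
qed

lemma ip_lim:
  assumes F: "L2 M F" and G: "L2 M G" and Fs: "\<And>N. L2 M (Fs N)" and Gs: "\<And>N. L2 M (Gs N)"
    and cF: "(\<lambda>N. nsq M (\<lambda>x. F x - Fs N x)) \<longlonglongrightarrow> 0"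
    and cG: "(\<lambda>N. nsq M (\<lambda>x. G x - Gs N x)) \<longlonglongrightarrow> 0"
  shows "(\<lambda>N. ip M (Fs N) (Gs N)) \<longlonglongrightarrow> ip M F G"
proof -
  define dF where "dF N = (\<lambda>x. F x - Fs N x)" for N
  define dG where "dG N = (\<lambda>x. G x - Gs N x)" for N
  have dF: "L2 M (dF N)" and dG: "L2 M (dG N)" for N
    unfolding dF_def dG_def using L2_diff[OF F Fs] L2_diff[OF G Gs] by auto
  have eq: "ip M F G - ip M (Fs N) (Gs N) = ip M (dF N) G + ip M F (dG N) - ip M (dF N) (dG N)" for N
  proof -
    have pt: "F x * cnj (G x) - Fs N x * cnj (Gs N x) =
      dF N x * cnj (G x) + F x * cnj (dG N x) - dF N x * cnj (dG N x)" for x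
      unfolding dF_def dG_def by (simp add: algebra_simps)
    have "ip M F G - ip M (Fs N) (Gs N) = (LINT x|M. F x * cnj (G x) - Fs N x * cnj (Gs N x))"
      unfolding ip_def using prod_int[OF F G] prod_int[OF Fs Gs] by simp
    also have "\<dots> = (LINT x|M. dF N x * cnj (G x) + F x * cnj (dG N x) - dF N x * cnj (dG N x))"
      using pt by simp
    also have "\<dots> = ip M (dF N) G + ip M F (dG N) - ip M (dF N) (dG N)"
      unfolding ip_def using prod_int[OF dF G] prod_int[OF F dG] prod_int[OF dF dG] by simp
    finally show ?thesis .
  qed
  have bound: "norm (ip M (Fs N) (Gs N) - ip M F G) \<le>
      sqrt (nsq M (dF N)) * sqrt (nsq M G) + sqrt (nsq M F) * sqrt (nsq M (dG N))
      + sqrt (nsq M (dF N)) * sqrt (nsq M (dG N))" for N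
  proof -
    have "norm (ip M (Fs N) (Gs N) - ip M F G) = norm (ip M (dF N) G + ip M F (dG N) - ip M (dF N) (dG N))"
      using eq[of N] by (simp add: norm_minus_commute)
    also have "\<dots> \<le> norm (ip M (dF N) G) + norm (ip M F (dG N)) + norm (ip M (dF N) (dG N))"
      using norm_triangle_ineq4[of "ip M (dF N) G + ip M F (dG N)" "ip M (dF N) (dG N)"]
        norm_triangle_ineq[of "ip M (dF N) G" "ip M F (dG N)"] by linarith
    also have "\<dots> \<le> sqrt (nsq M (dF N)) * sqrt (nsq M G) + sqrt (nsq M F) * sqrt (nsq M (dG N))
      + sqrt (nsq M (dF N)) * sqrt (nsq M (dG N))"
      using CS[OF dF G] CS[OF F dG] CS[OF dF dG] by (intro add_mono) auto
    finally show ?thesis .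
  qed
  have sF: "(\<lambda>N. sqrt (nsq M (dF N))) \<longlonglongrightarrow> 0" using tendsto_real_sqrt[OF cF] unfolding dF_def by simp
  have sG: "(\<lambda>N. sqrt (nsq M (dG N))) \<longlonglongrightarrow> 0" using tendsto_real_sqrt[OF cG] unfolding dG_def by simp
  have "(\<lambda>N. sqrt (nsq M (dF N)) * sqrt (nsq M G) + sqrt (nsq M F) * sqrt (nsq M (dG N))
      + sqrt (nsq M (dF N)) * sqrt (nsq M (dG N))) \<longlonglongrightarrow> 0 * sqrt (nsq M G) + sqrt (nsq M F) * 0 + 0 * 0"
    by (intro tendsto_intros sF sG)
  hence "(\<lambda>N. sqrt (nsq M (dF N)) * sqrt (nsq M G) + sqrt (nsq M F) * sqrt (nsq M (dG N))
      + sqrt (nsq M (dF N)) * sqrt (nsq M (dG N))) \<longlonglongrightarrow> 0" by simp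
  hence "(\<lambda>N. ip M (Fs N) (Gs N) - ip M F G) \<longlonglongrightarrow> 0"
    by (rule Lim_null_comparison[rotated]) (use bound in auto)
  thus ?thesis by (simp add: LIM_zero_iff)
qed

context lfm begin

lemma meas_shift: "f \<in> borel_measurable M \<Longrightarrow> (\<lambda>x. f (x + t)) \<in> borel_measurable M"
  using measurable_compose[OF meas_trans] by blast

lemma meas_dilf: "f \<in> borel_measurable M \<Longrightarrow> (\<lambda>x. f (ipr * x)) \<in> borel_measurable M"
  using measurable_compose[OF meas_ipr] by blast

lemma L2_shift: assumes "L2 M f" shows "L2 M (\<lambda>x. f (x + t))"
proof -
  have m: "f \<in> borel_measurable M" using assms by (simp add: L2_def)
  have "(\<lambda>x. (cmod (f x))\<^sup>2) \<in> borel_measurable M" using m by measurable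
  hence "integrable M (\<lambda>x. (cmod (f (x + t)))\<^sup>2)"
    using integrable_trans[of "\<lambda>x. (cmod (f x))\<^sup>2" t] L2_int[OF assms] by simp
  thus ?thesis using meas_shift[OF m] by (simp add: L2_def)
qed

lemma L2_dil: assumes "L2 M f" shows "L2 M (\<lambda>x. f (ipr * x))"
proof -
  have m: "f \<in> borel_measurable M" using assms by (simp add: L2_def)
  have "(\<lambda>x. (cmod (f x))\<^sup>2) \<in> borel_measurable M" using m by measurable
  hence "integrable M (\<lambda>x. (cmod (f (ipr * x)))\<^sup>2)"
    using integrable_dil[of "\<lambda>x. (cmod (f x))\<^sup>2"] L2_int[OF assms] by simp
  thus ?thesis using meas_dilf[OF m] by (simp add: L2_def)
qed

lemma L2_aff: assumes "L2 M f" shows "L2 M (\<lambda>x. f (ipr * x - t))"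
  using L2_dil[OF L2_shift[OF assms, of "-t"]] by simp

lemma nsq_shift: assumes "L2 M f" shows "nsq M (\<lambda>x. f (x + t)) = nsq M f"
proof -
  have m: "f \<in> borel_measurable M" using assms by (simp add: L2_def)
  have "(\<lambda>x. (cmod (f x))\<^sup>2) \<in> borel_measurable M" using m by measurable
  thus ?thesis unfolding nsq_def by (rule int_trans)
qed

end



context lfa begin
definition w :: "nat \<Rightarrow> nat \<Rightarrow> nat \<Rightarrow> nat" where
  "w j l k = (SOME m. u m = ipr * u k + u l - u j)"
lemma w_spec: "u (w j l k) = ipr * u k + u l - u j"
  unfolding w_def using someI_ex[OF u_comb[of k l j]] .
end

context lfm begin

lemma int_T:
  assumes f0: "L2 M f0" and g0: "L2 M g0"
  shows "(LINT x|M. f0 (ipr * x - u j) * cnj (g0 (ipr * x - (ipr * u k + u l))))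
       = complex_of_real (1 / real q) * ip M f0 (\<lambda>x. g0 (x - u (w j l k)))"
proof -
  have [measurable]: "f0 \<in> borel_measurable M" "g0 \<in> borel_measurable M" using f0 g0 by (auto simp: L2_def)
  define t where "t = ipr * u k + u l"
  define h where "h y = f0 (y - u j) * cnj (g0 (y - t))" for y
  have hm: "h \<in> borel_measurable M"
  proof -
    have "(\<lambda>y. f0 (y + - u j)) \<in> borel_measurable M" by (rule meas_shift) measurable
    moreover have "(\<lambda>y. g0 (y + - t)) \<in> borel_measurable M" by (rule meas_shift) measurable
    ultimately show ?thesis unfolding h_def by simp
  qed
  have "(LINT x|M. f0 (ipr * x - u j) * cnj (g0 (ipr * x - t))) = (LINT x|M. h (ipr * x))"
    by (simp add: h_def)
  also have "\<dots> = (1 / real q) *\<^sub>R (LINT y|M. h y)" by (rule int_dil[OF hm])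
  also have "(LINT y|M. h y) = (LINT y|M. h (y + u j))" by (rule int_trans[OF hm, symmetric])
  also have "\<dots> = ip M f0 (\<lambda>x. g0 (x - u (w j l k)))"
    unfolding ip_def h_def w_spec t_def by (simp add: algebra_simps)
  finally show ?thesis unfolding t_def by (simp add: scaleR_conv_of_real)
qed

lemma GL:
  fixes f0 g0 F G :: "'k \<Rightarrow> complex" and \<alpha> \<beta> :: "nat \<Rightarrow> complex"
  assumes f0: "L2 M f0" and g0: "L2 M g0" and F: "L2 M F" and G: "L2 M G"
    and tsF: "two_scale M q pr u \<alpha> f0 F" and tsG: "two_scale M q pr u \<beta> g0 G"
  shows "(\<lambda>N. \<Sum>j<N. \<Sum>l<N. \<alpha> j * cnj (\<beta> l) * ip M f0 (\<lambda>x. g0 (x - u (w j l k))))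
           \<longlonglongrightarrow> ip M F (\<lambda>x. G (x - u k))"
proof -
  define sq where "sq = complex_of_real (sqrt (real q))"
  define Fs where "Fs N x = sq * (\<Sum>j<N. \<alpha> j * f0 (ipr * x - u j))" for N x
  define Gs' where "Gs' N x = sq * (\<Sum>l<N. \<beta> l * g0 (ipr * x - u l))" for N x
  define Gs where "Gs N x = Gs' N (x - u k)" for N x
  have LFs: "L2 M (Fs N)" for N
    unfolding Fs_def by (intro L2_cmult L2_sum L2_aff f0)
  have LGs': "L2 M (Gs' N)" for N
    unfolding Gs'_def by (intro L2_cmult L2_sum L2_aff g0)
  have LGs: "L2 M (Gs N)" for N
    using L2_shift[OF LGs'[of N], of "- u k"] unfolding Gs_def by simp
  have LG': "L2 M (\<lambda>x. G (x - u k))" using L2_shift[OF G, of "- u k"] by simp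
  have cF: "(\<lambda>N. nsq M (\<lambda>x. F x - Fs N x)) \<longlonglongrightarrow> 0"
    using tsF unfolding two_scale_def L2_lim_def Fs_def sq_def .
  have cG0: "(\<lambda>N. nsq M (\<lambda>x. G x - Gs' N x)) \<longlonglongrightarrow> 0"
    using tsG unfolding two_scale_def L2_lim_def Gs'_def sq_def .
  have "nsq M (\<lambda>x. G (x - u k) - Gs N x) = nsq M (\<lambda>x. G x - Gs' N x)" for N
    using nsq_shift[OF L2_diff[OF G LGs'[of N]], of "- u k"] unfolding Gs_def by simp
  hence cG: "(\<lambda>N. nsq M (\<lambda>x. G (x - u k) - Gs N x)) \<longlonglongrightarrow> 0" using cG0 by simp
  have lim: "(\<lambda>N. ip M (Fs N) (Gs N)) \<longlonglongrightarrow> ip M F (\<lambda>x. G (x - u k))"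
    by (rule ip_lim[OF F LG' LFs LGs cF cG])
  have eq: "ip M (Fs N) (Gs N) = (\<Sum>j<N. \<Sum>l<N. \<alpha> j * cnj (\<beta> l) * ip M f0 (\<lambda>x. g0 (x - u (w j l k))))" for N
  proof -
    define T where "T j l x = f0 (ipr * x - u j) * cnj (g0 (ipr * x - (ipr * u k + u l)))" for j l x
    have TI: "integrable M (T j l)" for j l
      unfolding T_def by (rule prod_int[OF L2_aff[OF f0] L2_aff[OF g0]])
    have sqq: "sq * cnj sq = complex_of_real (real q)"
      unfolding sq_def by (simp flip: of_real_mult)
    have pt: "Fs N x * cnj (Gs N x) = (\<Sum>j<N. \<Sum>l<N. (complex_of_real (real q) * (\<alpha> j * cnj (\<beta> l))) * T j l x)" for x
    proof -
      have gx: "ipr * (x - u k) - u l = ipr * x - (ipr * u k + u l)" for l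
        by (simp add: algebra_simps)
      have "Fs N x * cnj (Gs N x) = (sq * cnj sq) *
          ((\<Sum>j<N. \<alpha> j * f0 (ipr * x - u j)) * (\<Sum>l<N. cnj (\<beta> l) * cnj (g0 (ipr * x - (ipr * u k + u l)))))"
        unfolding Fs_def Gs_def Gs'_def gx by (simp add: cnj_sum mult_ac)
      also have "\<dots> = (sq * cnj sq) * (\<Sum>j<N. \<Sum>l<N. (\<alpha> j * f0 (ipr * x - u j)) * (cnj (\<beta> l) * cnj (g0 (ipr * x - (ipr * u k + u l)))))"
        by (simp only: sum_product)
      also have "\<dots> = (\<Sum>j<N. \<Sum>l<N. (sq * cnj sq) * ((\<alpha> j * f0 (ipr * x - u j)) * (cnj (\<beta> l) * cnj (g0 (ipr * x - (ipr * u k + u l))))))"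
        by (simp only: sum_distrib_left)
      also have "\<dots> = (\<Sum>j<N. \<Sum>l<N. (complex_of_real (real q) * (\<alpha> j * cnj (\<beta> l))) * T j l x)"
        unfolding sqq T_def by (intro sum.cong refl) (simp only: mult_ac)
      finally show ?thesis .
    qed
    have "ip M (Fs N) (Gs N) = (LINT x|M. (\<Sum>j<N. \<Sum>l<N. (complex_of_real (real q) * (\<alpha> j * cnj (\<beta> l))) * T j l x))"
      unfolding ip_def pt ..
    also have "\<dots> = (\<Sum>j<N. \<Sum>l<N. (complex_of_real (real q) * (\<alpha> j * cnj (\<beta> l))) * (LINT x|M. T j l x))"
      using TI by (simp add: integral_sum)
    also have "\<dots> = (\<Sum>j<N. \<Sum>l<N. \<alpha> j * cnj (\<beta> l) * ip M f0 (\<lambda>x. g0 (x - u (w j l k))))"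
    proof (intro sum.cong refl)
      fix j l
      have "(LINT x|M. T j l x) = complex_of_real (1 / real q) * ip M f0 (\<lambda>x. g0 (x - u (w j l k)))"
        unfolding T_def by (rule int_T[OF f0 g0])
      moreover have "complex_of_real (real q) * complex_of_real (1 / real q) = 1"
        using rq by (simp flip: of_real_mult)
      ultimately show "complex_of_real (real q) * (\<alpha> j * cnj (\<beta> l)) * (LINT x|M. T j l x) =
          \<alpha> j * cnj (\<beta> l) * ip M f0 (\<lambda>x. g0 (x - u (w j l k)))"
        by (simp add: mult_ac)
    qed
    finally show ?thesis .
  qed
  show ?thesis using lim unfolding eq .
qed

end



context lfm begin

lemma main:
  fixes phi phit :: "'k \<Rightarrow> complex" and psi psit om omt :: "nat \<Rightarrow> 'k \<Rightarrow> complex"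
    and a b :: "nat \<Rightarrow> nat \<Rightarrow> complex" and Q :: nat and U :: "nat \<Rightarrow> 'k"
  assumes Qd: "Q = p ^ c" and Ud: "U = u_pt p c zeta pr"
    and L2_funs: "L2 M phi" "L2 M phit"
      "\<forall>l\<in>{1..<Q}. L2 M (psi l)" "\<forall>l\<in>{1..<Q}. L2 M (psit l)"
    and refine_phi: "two_scale M Q pr U (a 0) phi phi"
    and refine_phit: "two_scale M Q pr U (b 0) phit phit"
    and refine_psi: "\<forall>l\<in>{1..<Q}. two_scale M Q pr U (a l) phi (psi l)"
    and refine_psit: "\<forall>l\<in>{1..<Q}. two_scale M Q pr U (b l) phit (psit l)"
    and biorth1: "\<forall>k. ip M phi (\<lambda>x. phit (x - U k)) = (if k = 0 then 1 else 0)"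
    and biorth4: "\<forall>k. \<forall>l\<in>{1..<Q}. \<forall>l'\<in>{1..<Q}.
                    ip M (psi l) (\<lambda>x. psit l' (x - U k)) = (if l = l' \<and> k = 0 then 1 else 0)"
    and om0: "om 0 = phi" and omt0: "omt 0 = phit"
    and om_L2: "\<forall>n. L2 M (om n)" and omt_L2: "\<forall>n. L2 M (omt n)"
    and om_rec: "\<forall>n. two_scale M Q pr U (a (n mod Q)) (om (n div Q)) (om n)"
    and omt_rec: "\<forall>n. two_scale M Q pr U (b (n mod Q)) (omt (n div Q)) (omt n)"
  shows "\<forall>n k. ip M (om n) (\<lambda>x. omt n (x - U k)) = (if k = 0 then 1 else 0)"
proof -
  note A = L2_funs refine_phi refine_phit refine_psi refine_psit biorth1 biorth4 om_rec omt_rec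
  note B = A[unfolded Qd Ud]
  have "\<forall>k. ip M (om n) (\<lambda>x. omt n (x - u k)) = (if k = 0 then 1 else 0)" for n
  proof (induction n rule: less_induct)
    case (less n)
    show ?case
    proof (cases "n = 0")
      case True thus ?thesis using B(9) om0 omt0 by simp
    next
      case False
      define r where "r = n div q"
      define s where "s = n mod q"
      have rn: "r < n" unfolding r_def using False q_ge2 by simp
      have IH: "ip M (om r) (\<lambda>x. omt r (x - u m)) = ip M phi (\<lambda>x. phit (x - u m))" for m
        using less.IH[OF rn] B(9) by simp
      have slt: "s < q" unfolding s_def using q_ge2 by simp
      show ?thesis
      proof
        fix k
        have X: "(\<lambda>N. \<Sum>j<N. \<Sum>l<N. a s j * cnj (b s l) * ip M (om r) (\<lambda>x. omt r (x - u (w j l k))))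
           \<longlonglongrightarrow> ip M (om n) (\<lambda>x. omt n (x - u k))"
          unfolding r_def s_def
          by (rule GL[OF om_L2[rule_format] omt_L2[rule_format] om_L2[rule_format] omt_L2[rule_format]])
            (use B(11,12) in auto)
        hence X': "(\<lambda>N. \<Sum>j<N. \<Sum>l<N. a s j * cnj (b s l) * ip M phi (\<lambda>x. phit (x - u (w j l k))))
           \<longlonglongrightarrow> ip M (om n) (\<lambda>x. omt n (x - u k))"
          by (simp only: IH)
        have Y: "(\<lambda>N. \<Sum>j<N. \<Sum>l<N. a s j * cnj (b s l) * ip M phi (\<lambda>x. phit (x - u (w j l k))))
           \<longlonglongrightarrow> (if k = 0 then 1 else 0)"
        proof (cases "s = 0")
          case True
          have "(\<lambda>N. \<Sum>j<N. \<Sum>l<N. a 0 j * cnj (b 0 l) * ip M phi (\<lambda>x. phit (x - u (w j l k))))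
           \<longlonglongrightarrow> ip M phi (\<lambda>x. phit (x - u k))"
            by (rule GL[OF B(1,2,1,2,5,6)])
          thus ?thesis using True B(9) by simp
        next
          case False
          hence sI: "s \<in> {1..<q}" using slt by auto
          have "(\<lambda>N. \<Sum>j<N. \<Sum>l<N. a s j * cnj (b s l) * ip M phi (\<lambda>x. phit (x - u (w j l k))))
           \<longlonglongrightarrow> ip M (psi s) (\<lambda>x. psit s (x - u k))"
            by (rule GL[OF B(1,2)]) (use B(3,4,7,8) sI in auto)
          thus ?thesis using B(10) sI by simp
        qed
        show "ip M (om n) (\<lambda>x. omt n (x - u k)) = (if k = 0 then 1 else 0)"
          using LIMSEQ_unique[OF X' Y] .
      qed
    qed
  qed
  thus ?thesis unfolding Ud by simp
qed

end

theorem theorem3p2: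
  fixes absv :: "'k::{field,topological_space} \<Rightarrow> real"
    and M :: "'k measure"
    and p c q :: nat and pr :: 'k and zeta :: "nat \<Rightarrow> 'k"
    and u :: "nat \<Rightarrow> 'k" and chi :: "'k \<Rightarrow> complex"
    and phi phit :: "'k \<Rightarrow> complex"
    and psi psit :: "nat \<Rightarrow> 'k \<Rightarrow> complex"
    and a b :: "nat \<Rightarrow> nat \<Rightarrow> complex"
    and om omt :: "nat \<Rightarrow> 'k \<Rightarrow> complex"
  assumes K: "local_field_char_p absv p c pr"
    and q: "q = p ^ c"
    and zeta: "residue_basis absv p c zeta"
    and u: "u = u_pt p c zeta pr"
    and haar: "haar_measure absv M"
    and chi: "good_character absv q chi"
    and L2_funs: "L2 M phi" "L2 M phit"
      "\<forall>l\<in>{1..<q}. L2 M (psi l)" "\<forall>l\<in>{1..<q}. L2 M (psit l)"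
    and coeff_l2: "\<forall>s<q. summable (\<lambda>k. (cmod (a s k))\<^sup>2)"
      "\<forall>s<q. summable (\<lambda>k. (cmod (b s k))\<^sup>2)"
    and refine_phi: "two_scale M q pr u (a 0) phi phi"
    and refine_phit: "two_scale M q pr u (b 0) phit phit"
    and refine_psi: "\<forall>l\<in>{1..<q}. two_scale M q pr u (a l) phi (psi l)"
    and refine_psit: "\<forall>l\<in>{1..<q}. two_scale M q pr u (b l) phit (psit l)"
    and MRA: "\<exists>V. mra M pr u phi V \<and>
                (\<exists>W. direct_complement M W (V 0) (V 1) \<and>
                     riesz_basis M (\<lambda>(l, k) x. psi l (x - u k)) ({1..<q} \<times> UNIV) W)"
    and biorth1: "\<forall>k. ip M phi (\<lambda>x. phit (x - u k)) = (if k = 0 then 1 else 0)"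
    and biorth2: "\<forall>k. \<forall>l\<in>{1..<q}. ip M phi (\<lambda>x. psit l (x - u k)) = 0"
    and biorth3: "\<forall>k. \<forall>l\<in>{1..<q}. ip M phit (\<lambda>x. psi l (x - u k)) = 0"
    and biorth4: "\<forall>k. \<forall>l\<in>{1..<q}. \<forall>l'\<in>{1..<q}.
                    ip M (psi l) (\<lambda>x. psit l' (x - u k)) = (if l = l' \<and> k = 0 then 1 else 0)"
    and om0: "om 0 = phi" and omt0: "omt 0 = phit"
    and om_L2: "\<forall>n. L2 M (om n)" and omt_L2: "\<forall>n. L2 M (omt n)"
    and om_rec: "\<forall>n. two_scale M q pr u (a (n mod q)) (om (n div q)) (om n)"
    and omt_rec: "\<forall>n. two_scale M q pr u (b (n mod q)) (omt (n div q)) (omt n)"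
  shows "\<forall>n k. ip M (om n) (\<lambda>x. omt n (x - u k)) = (if k = 0 then 1 else 0)"
proof -
  interpret L: lfm absv p c pr zeta M
    by unfold_locales (rule K zeta haar)+
  show ?thesis
    by (rule L.main[OF q u L2_funs refine_phi refine_phit refine_psi refine_psit biorth1 biorth4
          om0 omt0 om_L2 omt_L2 om_rec omt_rec])
qed


end
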